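(* Let $S:\mathbb Z^d\to\mathbb Z^d$ be an automorphism with $\mathrm{spec}(S)=\{1\}$. Then there are integers $n_1\ge n_2\ge\cdots\ge n_J>0$ with $\sum_j n_j=d$ and a basis of $\mathbb Z^d$ with respect to which $S$ is represented by a matrix $A$ whose block decomposition $A=(B_{\alpha,\beta})_{1\le\alpha,\beta\le J}$ of type $(n_1,\dots,n_J)$ satisfies: (a) $B_{\alpha,\alpha}=I$ for $\alpha=1,\dots,J$; (b) $B_{\alpha,\beta}=0$ for $\alpha<\beta$; (c) $B_{\alpha,\alpha-1}$ has rank $n_\alpha$ for $\alpha=2,\dots,J$.
   Context: The block decomposition of type $(n_1,\dots,n_J)$ of a $d\times d$ matrix $A$ consists of the $n_\alpha\times n_\beta$ matrices $B_{\alpha,\beta}$ whose $(i,j)$ entry is the $(n_1+\cdots+n_{\alpha-1}+i,\ n_1+\cdots+n_{\beta-1}+j)$ entry of $A$. $\mathrm{spec}$ denotes the set of eigenvalues. *)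

theory Defs
  imports "Jordan_Normal_Form.Spectral_Radius" "Jordan_Normal_Form.DL_Rank"
begin

definition block_offset :: "nat list \<Rightarrow> nat \<Rightarrow> nat" where
  "block_offset ns al = sum_list (take al ns)"

text \<open>The block B_{al,be} (0-indexed) of the block decomposition of type ns of A.\<close>
definition block_of :: "'a mat \<Rightarrow> nat list \<Rightarrow> nat \<Rightarrow> nat \<Rightarrow> 'a mat" where
  "block_of A ns al be = mat (ns ! al) (ns ! be)
     (\<lambda>(i, j). A $$ (block_offset ns al + i, block_offset ns be + j))"

definition int_mat_rank :: "int mat \<Rightarrow> nat" where
  "int_mat_rank B = vec_space.rank (dim_row B) (map_mat rat_of_int B)"

end

theory Submission
  imports Defs
begin

lemma strict_upper_nilpotent:
  fixes T :: "'a::comm_ring_1 mat"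
  assumes T: "T \<in> carrier_mat n n"
    and z: "\<And>i j. i < n \<Longrightarrow> j < n \<Longrightarrow> j \<le> i \<Longrightarrow> T $$ (i,j) = 0"
  shows "T ^\<^sub>m n = 0\<^sub>m n n"
proof -
  have main: "\<forall>i j. i < n \<longrightarrow> j < n \<longrightarrow> j < i + k \<longrightarrow> (T ^\<^sub>m k) $$ (i,j) = 0" for k
  proof (induction k)
    case 0
    then show ?case using T by auto
  next
    case (Suc k)
    show ?case
    proof (intro allI impI)
      fix i j assume i: "i < n" and j: "j < n" and ji: "j < i + Suc k"
      have Tk: "T ^\<^sub>m k \<in> carrier_mat n n" using T by auto
      have "(T ^\<^sub>m Suc k) $$ (i,j) = (T ^\<^sub>m k * T) $$ (i,j)" by simp
      also have "\<dots> = (\<Sum>l = 0..<n. (T ^\<^sub>m k) $$ (i,l) * T $$ (l,j))"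
        using Tk T i j by (simp add: scalar_prod_def)
      also have "\<dots> = 0"
      proof (rule sum.neutral, intro ballI)
        fix l assume l: "l \<in> {0..<n}"
        show "(T ^\<^sub>m k) $$ (i,l) * T $$ (l,j) = 0"
        proof (cases "l < i + k")
          case True then show ?thesis using Suc.IH i l by auto
        next
          case False then show ?thesis using z[of l j] l j ji by auto
        qed
      qed
      finally show "(T ^\<^sub>m Suc k) $$ (i,j) = 0" .
    qed
  qed
  show ?thesis
    by (rule eq_matI, insert main[of n] T, auto)
qed

lemma unipotent_nilpotent:
  fixes S :: "int mat"
  assumes S: "S \<in> carrier_mat d d" and sp: "spectrum (map_mat complex_of_int S) = {1}"
  shows "(S - 1\<^sub>m d) ^\<^sub>m d = 0\<^sub>m d d"
proof -
  let ?Sc = "map_mat complex_of_int S"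
  have Sc: "?Sc \<in> carrier_mat d d" using S by auto
  obtain es where cp: "char_poly ?Sc = (\<Prod>a\<leftarrow>es. [:-a,1:])" using char_poly_factorized[OF Sc] by auto
  obtain B P Q where sd: "schur_decomposition ?Sc es = (B,P,Q)" by (cases "schur_decomposition ?Sc es", auto)
  from schur_decomposition[OF Sc cp sd] have sim: "similar_mat_wit ?Sc B P Q"
    and ut: "upper_triangular B" and dg: "diag_mat B = es" by auto
  note w = similar_mat_witD2[OF Sc sim]
  have B: "B \<in> carrier_mat d d" using w by auto
  have es1: "e = 1" if "e \<in> set es" for e
  proof -
    have "poly (char_poly ?Sc) e = 0" unfolding cp using linear_poly_root[OF that] .
    then have "e \<in> spectrum ?Sc" using spectrum_root_char_poly[OF Sc] by auto
    then show ?thesis using sp by auto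
  qed
  have Bii: "B $$ (i,i) = 1" if "i < d" for i
  proof -
    have "B $$ (i,i) = diag_mat B ! i" using that B by (auto simp: diag_mat_def)
    also have "\<dots> \<in> set es" using dg that B by (auto simp: diag_mat_def)
    finally show ?thesis using es1 by auto
  qed
  let ?T = "B - 1\<^sub>m d"
  have T: "?T \<in> carrier_mat d d" using B by auto
  have "?T ^\<^sub>m d = 0\<^sub>m d d"
  proof (rule strict_upper_nilpotent[OF T])
    fix i j assume "i < d" "j < d" "j \<le> i"
    then show "?T $$ (i,j) = 0" using ut B Bii[of i] unfolding upper_triangular_def
      by (cases "j = i", auto)
  qed
  have sim2: "similar_mat_wit (?Sc - 1\<^sub>m d) ?T P Q"
  proof (rule similar_mat_witI[of _ _ d])
    show "?Sc - 1\<^sub>m d = P * ?T * Q"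
      using w B by (simp add: mult_minus_distrib_mat minus_mult_distrib_mat[of _ d d] assoc_mult_mat[of _ d d])
  qed (use w B in auto)
  have "(?Sc - 1\<^sub>m d) ^\<^sub>m d = 0\<^sub>m d d"
    unfolding similar_mat_wit_pow_id[OF sim2] \<open>?T ^\<^sub>m d = 0\<^sub>m d d\<close> using w by auto
  moreover have "map_mat complex_of_int (S - 1\<^sub>m d) = ?Sc - 1\<^sub>m d"
    by (rule eq_matI, insert S, auto)
  moreover have "map_mat complex_of_int ((S - 1\<^sub>m d) ^\<^sub>m d) = map_mat complex_of_int (S - 1\<^sub>m d) ^\<^sub>m d"
    by (rule of_int_hom.mat_hom_pow, insert S, auto)
  ultimately have eq: "map_mat complex_of_int ((S - 1\<^sub>m d) ^\<^sub>m d) = 0\<^sub>m d d" by simp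
  show ?thesis
  proof (rule eq_matI)
    fix i j assume "i < dim_row (0\<^sub>m d d :: int mat)" "j < dim_col (0\<^sub>m d d :: int mat)"
    then show "((S - 1\<^sub>m d) ^\<^sub>m d) $$ (i,j) = 0\<^sub>m d d $$ (i,j)"
      using arg_cong[OF eq, of "\<lambda>M. M $$ (i,j)"] S by auto
  qed (use S in auto)
qed

lemma rows_indep_right_inverse:
  fixes T :: "'a::linordered_field mat"
  assumes T: "T \<in> carrier_mat n c"
    and indep: "\<And>y. (\<And>j. j < c \<Longrightarrow> (\<Sum>i<n. y i * T $$ (i,j)) = 0) \<Longrightarrow> (\<forall>i<n. y i = 0)"
  shows "\<exists>R \<in> carrier_mat c n. T * R = 1\<^sub>m n"
proof -
  let ?Tt = "transpose_mat T"
  let ?G = "T * ?Tt"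
  have Tt: "?Tt \<in> carrier_mat c n" using T by auto
  have G: "?G \<in> carrier_mat n n" using T by auto
  have "det ?G \<noteq> 0"
  proof
    assume "det ?G = 0"
    then obtain v where v: "v \<in> carrier_vec n" "v \<noteq> 0\<^sub>v n" "?G *\<^sub>v v = 0\<^sub>v n"
      using det_0_iff_vec_prod_zero_field[OF G] by auto
    define w where "w = ?Tt *\<^sub>v v"
    have w: "w \<in> carrier_vec c" using Tt v unfolding w_def by auto
    have "?G *\<^sub>v v = T *\<^sub>v w" unfolding w_def using assoc_mult_mat_vec[OF T Tt v(1)] .
    then have "T *\<^sub>v w = 0\<^sub>v n" using v(3) by simp
    then have "v \<bullet> (T *\<^sub>v w) = 0" using v(1) by simp
    also have "v \<bullet> (T *\<^sub>v w) = w \<bullet> w"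
      using transpose_vec_mult_scalar[OF T w v(1)] unfolding w_def by simp
    finally have ww0: "w \<bullet> w = 0" .
    have "w \<bullet> w = (\<Sum>j\<in>{0..<c}. w $ j * w $ j)" unfolding scalar_prod_def using w by simp
    with ww0 have ww: "(\<Sum>j\<in>{0..<c}. w $ j * w $ j) = 0" by simp
    have "\<forall>j\<in>{0..<c}. w $ j * w $ j = 0"
      by (rule sum_nonneg_eq_0_iff[THEN iffD1, OF _ _ ww], auto)
    then have wj: "w $ j = 0" if "j < c" for j using that by auto
    have "\<forall>i<n. v $ i = 0"
    proof (rule indep)
      fix j assume j: "j < c"
      have "w $ j = (\<Sum>i\<in>{0..<n}. T $$ (i,j) * v $ i)"
        unfolding w_def using j T v by (simp add: scalar_prod_def)
      also have "\<dots> = (\<Sum>i<n. v $ i * T $$ (i,j))"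
        by (simp add: atLeast0LessThan mult.commute)
      finally show "(\<Sum>i<n. v $ i * T $$ (i,j)) = 0" using wj[OF j] by simp
    qed
    then have "v = 0\<^sub>v n" using v(1) by (intro eq_vecI, auto)
    with v show False by auto
  qed
  from det_non_zero_imp_unit[OF G this, of "()"]
  have "\<exists>B\<in>carrier_mat n n. B * ?G = 1\<^sub>m n \<and> ?G * B = 1\<^sub>m n"
    unfolding Units_def by (simp add: ring_mat_simps)
  then obtain B where B: "B \<in> carrier_mat n n" "?G * B = 1\<^sub>m n" by blast
  show ?thesis
  proof (intro bexI[of _ "?Tt * B"])
    show "T * (?Tt * B) = 1\<^sub>m n" using B(2) assoc_mult_mat[OF T Tt B(1)] by simp
  qed (use Tt B in auto)
qed

lemma right_inverse_rank:
  fixes B :: "'a::field mat"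
  assumes B: "B \<in> carrier_mat n m" and R: "R \<in> carrier_mat m n" and BR: "B * R = 1\<^sub>m n"
  shows "vec_space.rank n B = n"
proof -
  interpret vec_space "TYPE('a)" n .
  have cs: "span (set (cols B)) = carrier_vec n"
  proof -
    have "col_space B = carrier_vec n"
    proof
      show "col_space B \<subseteq> carrier_vec n" using col_space_eq[OF B] B by auto
      show "carrier_vec n \<subseteq> col_space B"
      proof
        fix y :: "'a vec" assume y: "y \<in> carrier_vec n"
        have "B *\<^sub>v (R *\<^sub>v y) = y"
          using assoc_mult_mat_vec[OF B R y, symmetric] BR y by simp
        moreover have "R *\<^sub>v y \<in> carrier_vec (dim_col B)" using R B y by auto
        ultimately show "y \<in> col_space B" using col_space_eq[OF B] B y by auto
      qed
    qed
    then show ?thesis unfolding col_space_def .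
  qed
  have vsV: "vs (carrier_vec n) = V" unfolding module_vec_def by simp
  have "rank B = dim" unfolding rank_def cs vsV by simp
  also have "\<dots> = n" by (rule dim_is_n)
  finally show ?thesis .
qed

lemma right_inverse_int_rank:
  assumes B: "B \<in> carrier_mat n m" and R: "R \<in> carrier_mat m n"
    and BR: "map_mat rat_of_int B * R = 1\<^sub>m n"
  shows "int_mat_rank B = n" and "n \<le> m"
proof -
  have B': "map_mat rat_of_int B \<in> carrier_mat n m" using B by auto
  have r: "vec_space.rank n (map_mat rat_of_int B) = n"
    by (rule right_inverse_rank[OF B' R BR])
  then show "int_mat_rank B = n" unfolding int_mat_rank_def using B by auto
  have "vec_space.rank n (map_mat rat_of_int B) \<le> m" by (rule vec_space.rank_le_nc[OF B'])
  then show "n \<le> m" using r by simp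
qed

definition unimod :: "nat \<Rightarrow> 'a::comm_ring_1 mat \<Rightarrow> bool" where
  "unimod n Q \<longleftrightarrow> Q \<in> carrier_mat n n \<and> (\<exists>Qi \<in> carrier_mat n n. Q * Qi = 1\<^sub>m n \<and> Qi * Q = 1\<^sub>m n)"

lemma unimod_one: "unimod n (1\<^sub>m n)"
  unfolding unimod_def by (intro conjI bexI[of _ "1\<^sub>m n"], auto)

lemma unimod_carrier: "unimod n Q \<Longrightarrow> Q \<in> carrier_mat n n"
  unfolding unimod_def by auto

lemma unimod_mult:
  assumes "unimod n A" "unimod n B" shows "unimod n (A * B)"
proof -
  obtain Ai where A: "A \<in> carrier_mat n n" "Ai \<in> carrier_mat n n" "A * Ai = 1\<^sub>m n" "Ai * A = 1\<^sub>m n"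
    using assms(1) unfolding unimod_def by auto
  obtain Bi where B: "B \<in> carrier_mat n n" "Bi \<in> carrier_mat n n" "B * Bi = 1\<^sub>m n" "Bi * B = 1\<^sub>m n"
    using assms(2) unfolding unimod_def by auto
  have "A * B * (Bi * Ai) = A * (B * (Bi * Ai))" using assoc_mult_mat[OF A(1) B(1) mult_carrier_mat[OF B(2) A(2)]] .
  also have "B * (Bi * Ai) = B * Bi * Ai" using assoc_mult_mat[OF B(1) B(2) A(2)] by simp
  finally have 1: "A * B * (Bi * Ai) = 1\<^sub>m n" using A B by simp
  have "Bi * Ai * (A * B) = Bi * (Ai * (A * B))" using assoc_mult_mat[OF B(2) A(2) mult_carrier_mat[OF A(1) B(1)]] .
  also have "Ai * (A * B) = Ai * A * B" using assoc_mult_mat[OF A(2) A(1) B(1)] by simp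
  finally have 2: "Bi * Ai * (A * B) = 1\<^sub>m n" using A B by simp
  show ?thesis unfolding unimod_def using A B 1 2 by (intro conjI bexI[of _ "Bi * Ai"], auto)
qed

lemma unimod_swap: assumes "k < n" "l < n" shows "unimod n (swaprows_mat n k l :: 'a::comm_ring_1 mat)"
  unfolding unimod_def using swaprows_mat_inv[OF assms]
  by (intro conjI bexI[of _ "swaprows_mat n k l"], auto)

lemma unimod_addrow: assumes "k < n" "l < n" "k \<noteq> l"
  shows "unimod n (addrow_mat n (a::'a::comm_ring_1) k l)"
proof -
  have "addrow_mat n (- a) k l * addrow_mat n a k l = 1\<^sub>m n"
    using addrow_mat_inv[OF assms, of "-a"] by simp
  then show ?thesis unfolding unimod_def using addrow_mat_inv[OF assms, of a]
    by (intro conjI bexI[of _ "addrow_mat n (-a) k l"], auto)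
qed

lemma abs_reduce:
  fixes x y :: int
  assumes "x \<noteq> 0" "y \<noteq> 0" "\<bar>y\<bar> \<le> \<bar>x\<bar>"
  shows "\<bar>(- sgn (x * y)) * y + x\<bar> < \<bar>x\<bar>"
  using assms by (cases "x > 0"; cases "y > 0") (auto simp: sgn_mult abs_if)

lemma col_pivot:
  fixes M :: "int mat"
  assumes "M \<in> carrier_mat d c" and "j0 < c"
  shows "\<exists>Q. unimod d Q \<and> (\<forall>i < d - 1. (Q * M) $$ (i, j0) = 0)"
  using assms
proof (induction "\<Sum>i<d. nat \<bar>M $$ (i,j0)\<bar>" arbitrary: M rule: less_induct)
  case less
  note M = less.prems(1) and j0 = less.prems(2)
  show ?case
  proof (cases "\<exists>i1 i2. i1 < d \<and> i2 < d \<and> i1 \<noteq> i2 \<and> M $$ (i1,j0) \<noteq> 0 \<and> M $$ (i2,j0) \<noteq> 0 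
     \<and> \<bar>M $$ (i2,j0)\<bar> \<le> \<bar>M $$ (i1,j0)\<bar>")
    case True
    then obtain i1 i2 where i: "i1 < d" "i2 < d" "i1 \<noteq> i2" "M $$ (i1,j0) \<noteq> 0" "M $$ (i2,j0) \<noteq> 0"
      "\<bar>M $$ (i2,j0)\<bar> \<le> \<bar>M $$ (i1,j0)\<bar>" by blast
    define a where "a = - sgn (M $$ (i1,j0) * M $$ (i2,j0))"
    define E where "E = addrow_mat d a i1 i2"
    have E: "unimod d E" unfolding E_def by (rule unimod_addrow[OF i(1-3)])
    have EM: "E * M = addrow a i1 i2 M" unfolding E_def using addrow_mat[OF M i(2)] by simp
    have EMc: "E * M \<in> carrier_mat d c" using EM M by simp
    have ent: "(E * M) $$ (i, j0) = (if i = i1 then a * M $$ (i2,j0) + M $$ (i1,j0) else M $$ (i,j0))"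
      if "i < d" for i using that M j0 unfolding EM by auto
    have lt: "(\<Sum>i<d. nat \<bar>(E * M) $$ (i,j0)\<bar>) < (\<Sum>i<d. nat \<bar>M $$ (i,j0)\<bar>)"
    proof (rule sum_strict_mono_ex1)
      show "\<forall>i\<in>{..<d}. nat \<bar>(E * M) $$ (i,j0)\<bar> \<le> nat \<bar>M $$ (i,j0)\<bar>"
        using ent abs_reduce[OF i(4) i(5) i(6)] unfolding a_def by auto
      show "\<exists>i\<in>{..<d}. nat \<bar>(E * M) $$ (i,j0)\<bar> < nat \<bar>M $$ (i,j0)\<bar>"
        using ent[OF i(1)] abs_reduce[OF i(4) i(5) i(6)] i(1) unfolding a_def by (intro bexI[of _ i1], auto)
    qed simp
    from less.hyps[OF lt EMc j0] obtain Q where Q: "unimod d Q" "\<forall>i < d - 1. (Q * (E * M)) $$ (i, j0) = 0"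
      by blast
    have "Q * (E * M) = Q * E * M" using unimod_carrier[OF Q(1)] unimod_carrier[OF E] M
      by (simp add: assoc_mult_mat[of _ d d _ d _ c])
    then show ?thesis using Q unimod_mult[OF Q(1) E] by (intro exI[of _ "Q * E"], auto)
  next
    case False
    have one: "M $$ (i,j0) = 0" if "i < d" "i0 < d" "i \<noteq> i0" "M $$ (i0,j0) \<noteq> 0" for i i0
    proof (rule ccontr)
      assume ne: "M $$ (i,j0) \<noteq> 0"
      show False
      proof (cases "\<bar>M $$ (i,j0)\<bar> \<le> \<bar>M $$ (i0,j0)\<bar>")
        case True then show False using False that ne by blast
      next
        case F: False then show False using False that ne by force
      qed
    qed
    show ?thesis
    proof (cases "\<exists>i0 < d. M $$ (i0,j0) \<noteq> 0")
      case True
      then obtain i0 where i0: "i0 < d" "M $$ (i0,j0) \<noteq> 0" by blast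
      define E where "E = (swaprows_mat d (d - 1) i0 :: int mat)"
      have d1: "d - 1 < d" using i0 by auto
      have E: "unimod d E" unfolding E_def by (rule unimod_swap[OF d1 i0(1)])
      have EM: "E * M = swaprows (d - 1) i0 M" unfolding E_def using swaprows_mat[OF M d1 i0(1)] by simp
      show ?thesis
      proof (intro exI[of _ E] conjI E allI impI)
        fix i assume i: "i < d - 1"
        show "(E * M) $$ (i, j0) = 0" unfolding EM using i M j0 one[OF _ i0(1) _ i0(2)] by auto
      qed
    next
      case False
      then show ?thesis using M by (intro exI[of _ "1\<^sub>m d"], auto simp: unimod_one)
    qed
  qed
qed

lemma unimod_blockdiag:
  assumes A: "unimod m (A::'a::comm_ring_1 mat)" and B: "unimod n B"
  shows "unimod (m+n) (four_block_mat A (0\<^sub>m m n) (0\<^sub>m n m) B)"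
proof -
  obtain Ai where Ai: "A \<in> carrier_mat m m" "Ai \<in> carrier_mat m m" "A * Ai = 1\<^sub>m m" "Ai * A = 1\<^sub>m m"
    using A unfolding unimod_def by auto
  obtain Bi where Bi: "B \<in> carrier_mat n n" "Bi \<in> carrier_mat n n" "B * Bi = 1\<^sub>m n" "Bi * B = 1\<^sub>m n"
    using B unfolding unimod_def by auto
  let ?X = "four_block_mat A (0\<^sub>m m n) (0\<^sub>m n m) B"
  let ?Y = "four_block_mat Ai (0\<^sub>m m n) (0\<^sub>m n m) Bi"
  have "?X * ?Y = four_block_mat (1\<^sub>m m) (0\<^sub>m m n) (0\<^sub>m n m) (1\<^sub>m n)"
    by (subst mult_four_block_mat[of _ m m _ n _ n _ _ m _ n], insert Ai Bi, auto)
  then have 1: "?X * ?Y = 1\<^sub>m (m+n)" by simp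
  have "?Y * ?X = four_block_mat (1\<^sub>m m) (0\<^sub>m m n) (0\<^sub>m n m) (1\<^sub>m n)"
    by (subst mult_four_block_mat[of _ m m _ n _ n _ _ m _ n], insert Ai Bi, auto)
  then have 2: "?Y * ?X = 1\<^sub>m (m+n)" by simp
  show ?thesis unfolding unimod_def using 1 2 Ai Bi by (intro conjI bexI[of _ ?Y], auto)
qed

lemma row_echelon_int:
  fixes M :: "int mat"
  assumes "M \<in> carrier_mat d c"
  shows "\<exists>Q k. unimod d Q \<and> k \<le> d \<and> (\<forall>i<k. \<forall>j<c. (Q*M) $$ (i,j) = 0) \<and>
     (\<forall>y::nat\<Rightarrow>rat. (\<forall>j<c. (\<Sum>i<d-k. y i * rat_of_int ((Q*M) $$ (k+i,j))) = 0) \<longrightarrow> (\<forall>i<d-k. y i = 0))"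
  using assms
proof (induction c arbitrary: d M)
  case 0
  show ?case by (intro exI[of _ "1\<^sub>m d"] exI[of _ d]) (auto simp: unimod_one)
next
  case (Suc c)
  note M = Suc.prems
  show ?case
  proof (cases "\<forall>i<d. M $$ (i,0) = 0")
    case True
    define M' where "M' = mat d c (\<lambda>(i,j). M $$ (i, Suc j))"
    have M': "M' \<in> carrier_mat d c" unfolding M'_def by auto
    obtain Q k where Q: "unimod d Q" "k \<le> d" "\<forall>i<k. \<forall>j<c. (Q*M') $$ (i,j) = 0"
      and ind: "\<forall>y::nat\<Rightarrow>rat. (\<forall>j<c. (\<Sum>i<d-k. y i * rat_of_int ((Q*M') $$ (k+i,j))) = 0) \<longrightarrow> (\<forall>i<d-k. y i = 0)"
      using Suc.IH[OF M'] by blast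
    have Qc: "Q \<in> carrier_mat d d" using unimod_carrier[OF Q(1)] .
    have e1: "(Q*M) $$ (i, Suc j) = (Q*M') $$ (i,j)" if "i<d" "j<c" for i j
    proof -
      have "col M (Suc j) = col M' j" using that M unfolding M'_def by (intro eq_vecI, auto)
      then show ?thesis using that M M' Qc by simp
    qed
    have e0: "(Q*M) $$ (i, 0) = 0" if "i<d" for i
    proof -
      have "col M 0 = 0\<^sub>v d" using True M by (intro eq_vecI, auto)
      then show ?thesis using that M Qc by simp
    qed
    show ?thesis
    proof (intro exI[of _ Q] exI[of _ k] conjI allI impI)
      show "unimod d Q" "k \<le> d" by fact+
    next
      fix i j assume "i < k" "j < Suc c"
      then show "(Q*M) $$ (i,j) = 0" using e0 e1 Q(2,3) by (cases j, auto)
    next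
      fix y :: "nat \<Rightarrow> rat" and i
      assume h: "\<forall>j<Suc c. (\<Sum>i<d-k. y i * rat_of_int ((Q*M) $$ (k+i,j))) = 0" and i: "i < d - k"
      have "\<forall>j<c. (\<Sum>i<d-k. y i * rat_of_int ((Q*M') $$ (k+i,j))) = 0"
      proof (intro allI impI)
        fix j assume j: "j < c"
        have "(\<Sum>i<d-k. y i * rat_of_int ((Q*M') $$ (k+i,j))) = (\<Sum>i<d-k. y i * rat_of_int ((Q*M) $$ (k+i,Suc j)))"
          using e1 j by (intro sum.cong, auto)
        also have "\<dots> = 0" using h j by auto
        finally show "(\<Sum>i<d-k. y i * rat_of_int ((Q*M') $$ (k+i,j))) = 0" .
      qed
      then show "y i = 0" using ind i by blast
    qed
  next
    case False
    then obtain i0 where i0: "i0 < d" "M $$ (i0,0) \<noteq> 0" by blast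
    have d0: "0 < d" using i0 by auto
    obtain Q1 where Q1: "unimod d Q1" "\<forall>i<d-1. (Q1*M) $$ (i,0) = 0" using col_pivot[OF M, of 0] by auto
    have Q1c: "Q1 \<in> carrier_mat d d" using unimod_carrier[OF Q1(1)] .
    obtain Q1i where Q1i: "Q1i \<in> carrier_mat d d" "Q1i * Q1 = 1\<^sub>m d" using Q1(1) unfolding unimod_def by auto
    define M1 where "M1 = Q1 * M"
    have M1: "M1 \<in> carrier_mat d (Suc c)" unfolding M1_def using Q1c M by auto
    define g where "g = M1 $$ (d-1, 0)"
    have g: "g \<noteq> 0"
    proof
      assume g0: "g = 0"
      have c0: "col M1 0 = 0\<^sub>v d"
      proof (rule eq_vecI)
        fix i assume "i < dim_vec (0\<^sub>v d :: int vec)"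
        then have i: "i < d" by simp
        have ci: "col M1 0 $ i = M1 $$ (i,0)" using i M1 by auto
        show "col M1 0 $ i = 0\<^sub>v d $ i"
          unfolding ci
        proof (cases "i < d - 1")
          case True then show "M1 $$ (i,0) = 0\<^sub>v d $ i" using Q1(2) i unfolding M1_def by auto
        next
          case False then have "i = d - 1" using i by auto
          then show "M1 $$ (i,0) = 0\<^sub>v d $ i" using g0 i unfolding g_def by auto
        qed
      qed (use M1 in auto)
      have "Q1i * M1 = Q1i * Q1 * M" unfolding M1_def using assoc_mult_mat[OF Q1i(1) Q1c M] by simp
      then have MM: "M = Q1i * M1" using Q1i(2) M by simp
      have "M $$ (i0,0) = row Q1i i0 \<bullet> col M1 0" using Q1i M1 i0 by (subst MM, simp)
      then have "M $$ (i0,0) = 0" unfolding c0 using Q1i i0 by simp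
      with i0 show False by simp
    qed
    define M2 where "M2 = mat (d-1) c (\<lambda>(i,j). M1 $$ (i, Suc j))"
    have M2: "M2 \<in> carrier_mat (d-1) c" unfolding M2_def by auto
    obtain Q2 k where Q2: "unimod (d-1) Q2" "k \<le> d-1" "\<forall>i<k. \<forall>j<c. (Q2*M2) $$ (i,j) = 0"
      and ind: "\<forall>y::nat\<Rightarrow>rat. (\<forall>j<c. (\<Sum>i<d-1-k. y i * rat_of_int ((Q2*M2) $$ (k+i,j))) = 0) \<longrightarrow> (\<forall>i<d-1-k. y i = 0)"
      using Suc.IH[OF M2] by blast
    have Q2c: "Q2 \<in> carrier_mat (d-1) (d-1)" using unimod_carrier[OF Q2(1)] .
    define E where "E = four_block_mat Q2 (0\<^sub>m (d-1) 1) (0\<^sub>m 1 (d-1)) (1\<^sub>m 1)"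
    have E: "unimod d E" using unimod_blockdiag[OF Q2(1) unimod_one[of 1]] d0 unfolding E_def by simp
    define m2 where "m2 = mat 1 c (\<lambda>(i,j). M1 $$ (d-1, Suc j))"
    define G where "G = (mat 1 1 (\<lambda>_. g) :: int mat)"
    have M1blk: "M1 = four_block_mat (0\<^sub>m (d-1) 1) M2 G m2"
    proof (rule eq_matI)
      fix i j assume "i < dim_row (four_block_mat (0\<^sub>m (d-1) 1) M2 G m2)" "j < dim_col (four_block_mat (0\<^sub>m (d-1) 1) M2 G m2)"
      then have i: "i < d" and j: "j < Suc c" using d0 by (auto simp: M2_def G_def m2_def)
      have ii: "i < d - 1 \<or> i = d - 1" using i by auto
      show "M1 $$ (i,j) = four_block_mat (0\<^sub>m (d-1) 1) M2 G m2 $$ (i,j)"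
        using ii i j Q1(2) d0 unfolding M2_def G_def m2_def g_def M1_def
        by (cases j) auto
    qed (use M1 d0 in \<open>auto simp: M2_def G_def m2_def\<close>)
    have EM1: "E * M1 = four_block_mat (0\<^sub>m (d-1) 1) (Q2 * M2) G m2"
    proof -
      have Gc: "G \<in> carrier_mat 1 1" and m2c: "m2 \<in> carrier_mat 1 c" unfolding G_def m2_def by auto
      show ?thesis unfolding E_def M1blk
        by (subst mult_four_block_mat[OF Q2c zero_carrier_mat[of "d-1" 1] zero_carrier_mat[of 1 "d-1"]
          one_carrier_mat[of 1] zero_carrier_mat[of "d-1" 1] M2 Gc m2c], insert Q2c M2 Gc m2c, auto)
    qed
    have ent1: "(E * M1) $$ (i, Suc j) = (Q2*M2) $$ (i,j)" if "i < d-1" "j < c" for i j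
      unfolding EM1 using that Q2c M2 by (simp add: G_def m2_def)
    have ent0: "(E * M1) $$ (i, 0) = (if i < d - 1 then 0 else g)" if "i < d" for i
      unfolding EM1 using that Q2c M2 d0 by (simp add: G_def m2_def)
    have QM: "E * Q1 * M = E * M1" unfolding M1_def
      using assoc_mult_mat[OF unimod_carrier[OF E] Q1c M] .
    show ?thesis
    proof (intro exI[of _ "E * Q1"] exI[of _ k] conjI allI impI)
      show "unimod d (E * Q1)" using unimod_mult[OF E Q1(1)] .
      show "k \<le> d" using Q2(2) by simp
    next
      fix i j assume ij: "i < k" "j < Suc c"
      then show "(E * Q1 * M) $$ (i,j) = 0" unfolding QM using ent0 ent1 Q2(2,3)
        by (cases j, auto)
    next
      fix y :: "nat \<Rightarrow> rat" and i
      assume h: "\<forall>j<Suc c. (\<Sum>i<d-k. y i * rat_of_int ((E * Q1 * M) $$ (k+i,j))) = 0" and i: "i < d - k"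
      define t where "t = d - 1 - k"
      have dk: "d - k = Suc t" unfolding t_def using Q2(2) d0 by auto
      have h': "(\<Sum>i<Suc t. y i * rat_of_int ((E * M1) $$ (k+i,j))) = 0" if "j < Suc c" for j
        using h that unfolding QM dk by auto
      have kt: "k + t = d - 1" unfolding t_def using Q2(2) by auto
      have "(\<Sum>i<Suc t. y i * rat_of_int ((E * M1) $$ (k+i,0)))
         = (\<Sum>i<t. y i * rat_of_int ((E * M1) $$ (k+i,0))) + y t * rat_of_int ((E * M1) $$ (k+t,0))"
        by simp
      also have "(\<Sum>i<t. y i * rat_of_int ((E * M1) $$ (k+i,0))) = 0"
        by (rule sum.neutral, insert ent0 kt d0, auto)
      also have "(E * M1) $$ (k+t,0) = g" using ent0[of "k+t"] kt d0 by simp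
      finally have "(\<Sum>i<Suc t. y i * rat_of_int ((E * M1) $$ (k+i,0))) = y t * rat_of_int g" by simp
      then have yt: "y t = 0" using h'[of 0] g by simp
      have "\<forall>j<c. (\<Sum>i<d-1-k. y i * rat_of_int ((Q2*M2) $$ (k+i,j))) = 0"
      proof (intro allI impI)
        fix j assume j: "j < c"
        have "(\<Sum>i<Suc t. y i * rat_of_int ((E * M1) $$ (k+i,Suc j)))
            = (\<Sum>i<t. y i * rat_of_int ((E * M1) $$ (k+i,Suc j)))" using yt by (simp add: sum.lessThan_Suc)
        also have "\<dots> = (\<Sum>i<t. y i * rat_of_int ((Q2*M2) $$ (k+i,j)))"
          using ent1 j unfolding t_def by (intro sum.cong, auto)
        finally show "(\<Sum>i<d-1-k. y i * rat_of_int ((Q2*M2) $$ (k+i,j))) = 0"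
          using h'[of "Suc j"] j unfolding t_def by simp
      qed
      then have "\<forall>i<t. y i = 0" using ind unfolding t_def by blast
      then show "y i = 0" using yt i dk by (cases "i = t", auto)
    qed
  qed
qed

lemma det_pow_mat: assumes A: "A \<in> carrier_mat n n"
  shows "det (A ^\<^sub>m m) = det A ^ m"
proof (induction m)
  case 0 then show ?case by simp
next
  case (Suc m)
  have "det (A ^\<^sub>m Suc m) = det (A ^\<^sub>m m * A)" by simp
  also have "\<dots> = det (A ^\<^sub>m m) * det A" by (rule det_mult[OF pow_carrier_mat[OF A] A])
  finally show ?case using Suc by simp
qed

lemma nilp_no_right_inv:
  fixes N :: "'a::field mat"
  assumes N: "N \<in> carrier_mat d d" and Y: "Y \<in> carrier_mat d d" and NY: "N * Y = 1\<^sub>m d"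
    and nil: "N ^\<^sub>m m = 0\<^sub>m d d" and d: "0 < d"
  shows False
proof -
  have "det N * det Y = 1" using det_mult[OF N Y] NY by simp
  then have "det N \<noteq> 0" by auto
  then have "det (N ^\<^sub>m m) \<noteq> 0" using det_pow_mat[OF N] by simp
  then show False using nil d by simp
qed

lemma block_offset_Cons_Suc: "block_offset (k # ns) (Suc al) = k + block_offset ns al"
  unfolding block_offset_def by simp

lemma block_offset_0: "block_offset ns 0 = 0"
  unfolding block_offset_def by simp

lemma block_offset_bound: assumes "al < length ns"
  shows "block_offset ns al + ns ! al \<le> sum_list ns"
proof -
  have "block_offset ns al + ns ! al = sum_list (take (Suc al) ns)"
    unfolding block_offset_def using assms by (simp add: take_Suc_conv_app_nth)
  also have "\<dots> \<le> sum_list ns"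
  proof -
    have "sum_list ns = sum_list (take (Suc al) ns) + sum_list (drop (Suc al) ns)"
      by (metis append_take_drop_id sum_list_append)
    then show ?thesis by simp
  qed
  finally show ?thesis .
qed

lemma block_offset_mono: assumes "al \<le> be" shows "block_offset ns al \<le> block_offset ns be"
proof -
  have "take be ns = take al ns @ take (be - al) (drop al ns)" using assms
    by (metis le_add_diff_inverse take_add)
  then show ?thesis unfolding block_offset_def by (metis le_add1 sum_list_append)
qed

lemma block_offset_ge: assumes "0 < be" "ns \<noteq> []" shows "ns ! 0 \<le> block_offset ns be"
proof -
  have "block_offset ns 1 = ns ! 0" using assms unfolding block_offset_def by (cases ns, auto)
  then show ?thesis using block_offset_mono[of 1 be ns] assms by simp
qed

lemma block_index_exists:
  assumes "j < sum_list ns"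
  shows "\<exists>be < length ns. \<exists>j' < ns ! be. j = block_offset ns be + j'"
  using assms
proof (induction ns arbitrary: j)
  case Nil then show ?case by simp
next
  case (Cons a ns)
  show ?case
  proof (cases "j < a")
    case True then show ?thesis by (intro exI[of _ 0], auto simp: block_offset_0)
  next
    case False
    then have "j - a < sum_list ns" using Cons.prems by simp
    from Cons.IH[OF this] obtain be j' where "be < length ns" "j' < ns ! be" "j - a = block_offset ns be + j'"
      by blast
    then show ?thesis using False by (intro exI[of _ "Suc be"], auto simp: block_offset_Cons_Suc)
  qed
qed

lemma block_of_shift:
  assumes A: "A = four_block_mat B11 B12 B21 A'" and B11: "B11 \<in> carrier_mat k k"
    and A': "A' \<in> carrier_mat r r" and r: "sum_list ns = r"
    and al: "al < length ns" and be: "be < length ns"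
  shows "block_of A (k # ns) (Suc al) (Suc be) = block_of A' ns al be"
proof -
  have ba: "block_offset ns al + ns ! al \<le> r" using block_offset_bound[OF al] r by simp
  have bb: "block_offset ns be + ns ! be \<le> r" using block_offset_bound[OF be] r by simp
  show ?thesis unfolding block_of_def
    by (rule eq_matI, insert ba bb B11 A' al be, auto simp: A block_offset_Cons_Suc)
qed

lemma block_of_top_right:
  assumes A: "A = four_block_mat B11 B12 B21 A'" and B11: "B11 \<in> carrier_mat k k"
    and B12: "B12 \<in> carrier_mat k r"
    and A': "A' \<in> carrier_mat r r" and r: "sum_list ns = r"
    and be: "be < length ns"
  shows "block_of A (k # ns) 0 (Suc be) = mat k (ns ! be) (\<lambda>(i,j). B12 $$ (i, block_offset ns be + j))"
proof -
  have bb: "block_offset ns be + ns ! be \<le> r" using block_offset_bound[OF be] r by simp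
  show ?thesis
    unfolding block_of_def
    by (rule eq_matI, insert bb B11 B12 A' be, auto simp: A block_offset_Cons_Suc block_offset_0)
qed

lemma block_of_top_left:
  assumes A: "A = four_block_mat B11 B12 B21 A'" and B11: "B11 \<in> carrier_mat k k"
    and A': "A' \<in> carrier_mat r r"
  shows "block_of A (k # ns) 0 0 = B11"
  unfolding block_of_def
  by (rule eq_matI, insert B11 A', auto simp: A block_offset_0)

lemma block_of_sub:
  assumes A: "A = four_block_mat B11 B12 B21 A'" and B11: "B11 \<in> carrier_mat k k"
    and A': "A' \<in> carrier_mat r r" and r: "sum_list ns = r" and ne: "ns \<noteq> []"
  shows "block_of A (k # ns) 1 0 = mat (ns ! 0) k (\<lambda>(i,j). B21 $$ (i, j))"
proof -
  have b0: "ns ! 0 \<le> r" using block_offset_bound[of 0 ns] ne r by (simp add: block_offset_0)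
  show ?thesis
    unfolding block_of_def
    by (rule eq_matI, insert b0 B11 A', auto simp: A block_offset_0 block_offset_def)
qed

lemma four_block_pow_lower:
  assumes C: "C \<in> carrier_mat r k" and D: "D \<in> carrier_mat r r"
  shows "\<exists>Y X. Y \<in> carrier_mat k k \<and> X \<in> carrier_mat r k \<and>
     (four_block_mat (0\<^sub>m k k) (0\<^sub>m k r) C D) ^\<^sub>m m = four_block_mat Y (0\<^sub>m k r) X (D ^\<^sub>m m)"
proof (induction m)
  case 0
  have dr: "dim_row (four_block_mat (0\<^sub>m k k) (0\<^sub>m k r) C D) = k + r" using D by simp
  have "four_block_mat (1\<^sub>m k) (0\<^sub>m k r) (0\<^sub>m r k) (D ^\<^sub>m 0) = 1\<^sub>m (k+r)"
    using D by (simp del: four_block_one_mat add: four_block_one_mat[of k r])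
  then show ?case unfolding pow_mat.simps dr
    by (intro exI[of _ "1\<^sub>m k"] exI[of _ "0\<^sub>m r k"], simp)
next
  case (Suc m)
  then obtain Y X where YX: "Y \<in> carrier_mat k k" "X \<in> carrier_mat r k"
    "(four_block_mat (0\<^sub>m k k) (0\<^sub>m k r) C D) ^\<^sub>m m = four_block_mat Y (0\<^sub>m k r) X (D ^\<^sub>m m)" by blast
  have "(four_block_mat (0\<^sub>m k k) (0\<^sub>m k r) C D) ^\<^sub>m Suc m
     = four_block_mat Y (0\<^sub>m k r) X (D ^\<^sub>m m) * four_block_mat (0\<^sub>m k k) (0\<^sub>m k r) C D"
    using YX by simp
  also have "\<dots> = four_block_mat (Y * 0\<^sub>m k k + 0\<^sub>m k r * C) (Y * 0\<^sub>m k r + 0\<^sub>m k r * D)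
      (X * 0\<^sub>m k k + D ^\<^sub>m m * C) (X * 0\<^sub>m k r + D ^\<^sub>m m * D)"
    by (rule mult_four_block_mat[OF YX(1) zero_carrier_mat YX(2) pow_carrier_mat[OF D]
          zero_carrier_mat zero_carrier_mat C D])
  also have "\<dots> = four_block_mat (0\<^sub>m k k) (0\<^sub>m k r) (D ^\<^sub>m m * C) (D ^\<^sub>m m * D)"
    using YX C D pow_carrier_mat[OF D, of m] by (intro cong_four_block_mat, auto)
  also have "D ^\<^sub>m m * D = D ^\<^sub>m Suc m" by simp
  finally show ?case using C D by (intro exI[of _ "0\<^sub>m k k"] exI[of _ "D ^\<^sub>m m * C"], auto)
qed

lemma assoc_dim: assumes "dim_col A = dim_row B" "dim_col B = dim_row C" shows "A * B * C = A * (B * C)"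
proof (rule assoc_mult_mat[of A "dim_row A" "dim_col A" B "dim_col B" C "dim_col C"])
  show "A \<in> carrier_mat (dim_row A) (dim_col A)" unfolding carrier_mat_def by blast
  show "B \<in> carrier_mat (dim_col A) (dim_col B)" unfolding carrier_mat_def using assms by simp
  show "C \<in> carrier_mat (dim_col B) (dim_col C)" unfolding carrier_mat_def using assms by simp
qed
lemma add_mult_dim: assumes "dim_row A = dim_row B" "dim_col A = dim_col B" "dim_col A = dim_row C" shows "(A + B) * C = A * C + B * (C :: 'a::semiring_0 mat)"
proof (rule add_mult_distrib_mat[of A "dim_row A" "dim_col A" B C "dim_col C"])
  show "A \<in> carrier_mat (dim_row A) (dim_col A)" unfolding carrier_mat_def by blast
  show "B \<in> carrier_mat (dim_row A) (dim_col A)" unfolding carrier_mat_def using assms by simp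
  show "C \<in> carrier_mat (dim_col A) (dim_col C)" unfolding carrier_mat_def using assms by simp
qed
lemma mult_add_dim: assumes "dim_col A = dim_row B" "dim_row B = dim_row C" "dim_col B = dim_col C" shows "A * (B + C) = A * B + A * (C :: 'a::semiring_0 mat)"
proof (rule mult_add_distrib_mat[of A "dim_row A" "dim_col A" B "dim_col B" C])
  show "A \<in> carrier_mat (dim_row A) (dim_col A)" unfolding carrier_mat_def by blast
  show "B \<in> carrier_mat (dim_col A) (dim_col B)" unfolding carrier_mat_def using assms by simp
  show "C \<in> carrier_mat (dim_col A) (dim_col B)" unfolding carrier_mat_def using assms by simp
qed
lemmas mat_norm = carrier_matD index_mult_mat(2,3) index_add_mat(2,3) assoc_dim add_mult_dim mult_add_dim

lemma inv_cancel_left: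
  fixes A :: "'a::semiring_1 mat"
  assumes "A * B = 1\<^sub>m n" "A \<in> carrier_mat n n" "B \<in> carrier_mat n n" "Z \<in> carrier_mat n m"
  shows "A * (B * Z) = Z"
proof -
  have h: "A * B * Z = A * (B * Z)" by (rule assoc_mult_mat) (use assms in auto)
  then show ?thesis using assms(1) left_mult_one_mat[OF assms(4)] by simp
qed

lemma top_rows_identity:
  fixes A' :: "'a::{zero,one} mat"
  assumes A': "A' \<in> carrier_mat r r" and sm: "sum_list ns = r" and ne: "ns \<noteq> []"
    and diag: "\<forall>al<length ns. block_of A' ns al al = 1\<^sub>m (ns!al)"
    and zero: "\<forall>al be. al < be \<and> be < length ns \<longrightarrow> block_of A' ns al be = 0\<^sub>m (ns!al) (ns!be)"
    and i: "i < ns ! 0" and j: "j < r"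
  shows "A' $$ (i,j) = (if i = j then 1 else 0)"
proof -
  obtain be j' where be: "be < length ns" "j' < ns ! be" "j = block_offset ns be + j'"
    using block_index_exists[of j ns] j sm by auto
  have ent: "block_of A' ns 0 be $$ (i,j') = A' $$ (i, j)" unfolding block_of_def using i be
    by (simp add: block_offset_0)
  show ?thesis
  proof (cases "be = 0")
    case True
    then have "block_of A' ns 0 be = 1\<^sub>m (ns!0)" using diag ne by auto
    then show ?thesis using ent i be True by (simp add: block_offset_0)
  next
    case False
    then have "block_of A' ns 0 be = 0\<^sub>m (ns!0) (ns!be)" using zero be by auto
    moreover have "ns!0 \<le> block_offset ns be" using block_offset_ge[of be ns] False ne by simp
    ultimately show ?thesis using ent i be by auto
  qed
qed

lemma core:
  fixes N :: "int mat"
  assumes "N \<in> carrier_mat d d" and "N ^\<^sub>m m = 0\<^sub>m d d"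
  shows "\<exists>ns P A. sorted_wrt (\<ge>) ns \<and> (\<forall>n\<in>set ns. n > 0) \<and> sum_list ns = d \<and>
     unimod d P \<and> A \<in> carrier_mat d d \<and> (1\<^sub>m d + N) * P = P * A \<and>
     (\<forall>al < length ns. block_of A ns al al = 1\<^sub>m (ns ! al)) \<and>
     (\<forall>al be. al < be \<and> be < length ns \<longrightarrow> block_of A ns al be = 0\<^sub>m (ns ! al) (ns ! be)) \<and>
     (\<forall>al. 1 \<le> al \<and> al < length ns \<longrightarrow> int_mat_rank (block_of A ns al (al - 1)) = ns ! al)"
  using assms
proof (induction d arbitrary: N m rule: less_induct)
  case (less d)
  note N = less.prems(1) and nil = less.prems(2)
  show ?case
  proof (cases "d = 0")
    case True
    then show ?thesis using N
      by (intro exI[of _ "[]"] exI[of _ "1\<^sub>m 0"] exI[of _ "1\<^sub>m 0"]) (auto simp: unimod_one)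
  next
    case False
    then have d0: "0 < d" by simp
    obtain Q k where Q: "unimod d Q" "k \<le> d" and zr: "\<forall>i<k. \<forall>j<d. (Q*N) $$ (i,j) = 0"
      and ind: "\<forall>y::nat\<Rightarrow>rat. (\<forall>j<d. (\<Sum>i<d-k. y i * rat_of_int ((Q*N) $$ (k+i,j))) = 0) \<longrightarrow> (\<forall>i<d-k. y i = 0)"
      using row_echelon_int[OF N] by blast
    have Qc: "Q \<in> carrier_mat d d" using unimod_carrier[OF Q(1)] .
    obtain Qi where Qi: "Qi \<in> carrier_mat d d" "Q * Qi = 1\<^sub>m d" "Qi * Q = 1\<^sub>m d"
      using Q(1) unfolding unimod_def by auto
    define r where "r = d - k"
    have dkr: "d = k + r" unfolding r_def using Q(2) by simp
    define T where "T = mat r d (\<lambda>(i,j). rat_of_int ((Q*N) $$ (k+i,j)))"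
    have Tc: "T \<in> carrier_mat r d" unfolding T_def by simp
    have "\<exists>R \<in> carrier_mat d r. T * R = 1\<^sub>m r"
    proof (rule rows_indep_right_inverse[OF Tc])
      fix y :: "nat \<Rightarrow> rat"
      assume h: "\<And>j. j < d \<Longrightarrow> (\<Sum>i<r. y i * T $$ (i, j)) = 0"
      have "\<forall>j<d. (\<Sum>i<d-k. y i * rat_of_int ((Q*N) $$ (k+i,j))) = 0"
      proof (intro allI impI)
        fix j assume j: "j < d"
        have "(\<Sum>i<d-k. y i * rat_of_int ((Q*N) $$ (k+i,j))) = (\<Sum>i<r. y i * T $$ (i, j))"
          unfolding r_def T_def using j by (intro sum.cong, auto)
        then show "(\<Sum>i<d-k. y i * rat_of_int ((Q*N) $$ (k+i,j))) = 0" using h[OF j] by simp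
      qed
      then show "\<forall>i<r. y i = 0" using ind unfolding r_def by blast
    qed
    then obtain R where R: "R \<in> carrier_mat d r" "T * R = 1\<^sub>m r" by blast
    let ?q = "map_mat rat_of_int"
    have Nq: "?q N \<in> carrier_mat d d" using N by simp
    have Qq: "?q Q \<in> carrier_mat d d" using Qc by simp
    have Qiq: "?q Qi \<in> carrier_mat d d" using Qi by simp
    have mq: "?q (A * B) = ?q A * ?q B" if "A \<in> carrier_mat n1 n2" "B \<in> carrier_mat n2 n3" for A B n1 n2 n3
      by (rule of_int_hom.mat_hom_mult[OF that])
    have q1: "?q (1\<^sub>m n) = 1\<^sub>m n" for n by (rule of_int_hom.mat_hom_one)
    have QQi: "?q Q * ?q Qi = 1\<^sub>m d" using Qi mq[OF Qc Qi(1)] q1[of d] by simp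
    have QiQ: "?q Qi * ?q Q = 1\<^sub>m d" using Qi mq[OF Qi(1) Qc] q1[of d] by simp
    have QNq: "?q (Q * N) = ?q Q * ?q N" using mq[OF Qc N] .
    have k0: "0 < k"
    proof (rule ccontr)
      assume "\<not> 0 < k" then have k: "k = 0" by simp
      then have "T = ?q (Q * N)" unfolding T_def using Qc N by (intro eq_matI, auto simp: r_def)
      then have e1: "?q Q * (?q N * R) = 1\<^sub>m d" using R k r_def QNq Qq Nq by simp
      have "?q N * R = ?q Qi * (?q Q * (?q N * R))"
        using inv_cancel_left[OF QiQ Qiq Qq, of "?q N * R" r] Nq R by simp
      then have e2: "?q N * R = ?q Qi" using e1 Qiq by simp
      have Rd: "R \<in> carrier_mat d d" using R k r_def by simp
      have "?q N * (R * ?q Q) = ?q N * R * ?q Q" using assoc_mult_mat[OF Nq Rd Qq] by simp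
      then have e3: "?q N * (R * ?q Q) = 1\<^sub>m d" using e2 QiQ by simp
      have "?q N ^\<^sub>m m = ?q (N ^\<^sub>m m)" by (rule of_int_hom.mat_hom_pow[OF N, symmetric])
      moreover have "?q (0\<^sub>m d d) = (0\<^sub>m d d :: rat mat)" by (rule eq_matI, auto)
      ultimately have "?q N ^\<^sub>m m = 0\<^sub>m d d" using nil by simp
      from nilp_no_right_inv[OF Nq _ e3 this d0] show False using Rd Qq by simp
    qed
    define A0 where "A0 = Q * N * Qi"
    have A0c: "A0 \<in> carrier_mat d d" unfolding A0_def using Qc N Qi by auto
    have A0z: "A0 $$ (i,j) = 0" if "i < k" "j < d" for i j
    proof -
      have id: "i < d" using that Q(2) by simp
      have "row (Q * N) i = 0\<^sub>v d" using zr that id Qc N by (intro eq_vecI, auto)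
      moreover have "A0 $$ (i,j) = row (Q*N) i \<bullet> col Qi j" unfolding A0_def
        by (rule index_mult_mat(1)) (use that id Qc N Qi in auto)
      ultimately show ?thesis using Qi that by simp
    qed
    define C where "C = mat r k (\<lambda>(i,j). A0 $$ (k+i, j))"
    define N' where "N' = mat r r (\<lambda>(i,j). A0 $$ (k+i, k+j))"
    have Cc: "C \<in> carrier_mat r k" and N'c: "N' \<in> carrier_mat r r" unfolding C_def N'_def by auto
    have A0blk: "A0 = four_block_mat (0\<^sub>m k k) (0\<^sub>m k r) C N'"
    proof (rule eq_matI)
      fix i j assume "i < dim_row (four_block_mat (0\<^sub>m k k) (0\<^sub>m k r) C N')"
        "j < dim_col (four_block_mat (0\<^sub>m k k) (0\<^sub>m k r) C N')"
      then have ij: "i < k + r" "j < k + r" using Cc N'c by auto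
      show "A0 $$ (i,j) = four_block_mat (0\<^sub>m k k) (0\<^sub>m k r) C N' $$ (i,j)"
      proof (cases "i < k")
        case True then show ?thesis using A0z[of i j] ij dkr Cc N'c by auto
      next
        case False
        then obtain i' where i': "i = k + i'" "i' < r" using ij by (metis add_less_cancel_left le_iff_add not_less)
        show ?thesis
        proof (cases "j < k")
          case True then show ?thesis using i' N'c unfolding C_def by auto
        next
          case False
          then obtain j' where j': "j = k + j'" "j' < r" using ij by (metis add_less_cancel_left le_iff_add not_less)
          show ?thesis using i' j' unfolding C_def N'_def by auto
        qed
      qed
    qed (use A0c dkr Cc N'c in auto)
    have sim: "similar_mat_wit A0 N Q Qi"
      by (rule similar_mat_witI[of _ _ d], insert Qi Qc N A0c, auto simp: A0_def)
    have "A0 ^\<^sub>m m = Q * N ^\<^sub>m m * Qi" by (rule similar_mat_wit_pow_id[OF sim])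
    then have A0m: "A0 ^\<^sub>m m = 0\<^sub>m d d" using nil Qc Qi by simp
    obtain Y X0 where YX: "Y \<in> carrier_mat k k" "X0 \<in> carrier_mat r k"
      "(four_block_mat (0\<^sub>m k k) (0\<^sub>m k r) C N') ^\<^sub>m m = four_block_mat Y (0\<^sub>m k r) X0 (N' ^\<^sub>m m)"
      using four_block_pow_lower[OF Cc N'c] by blast
    have N'nil: "N' ^\<^sub>m m = 0\<^sub>m r r"
    proof (rule eq_matI)
      fix i j assume "i < dim_row (0\<^sub>m r r :: int mat)" "j < dim_col (0\<^sub>m r r :: int mat)"
      then have ij: "i < r" "j < r" by auto
      have "(N' ^\<^sub>m m) $$ (i,j) = (four_block_mat Y (0\<^sub>m k r) X0 (N' ^\<^sub>m m)) $$ (k+i, k+j)"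
        using YX ij N'c by simp
      also have "\<dots> = (A0 ^\<^sub>m m) $$ (k+i, k+j)" using YX A0blk by simp
      also have "\<dots> = 0" using A0m ij dkr by simp
      finally show "(N' ^\<^sub>m m) $$ (i,j) = 0\<^sub>m r r $$ (i,j)" using ij by simp
    qed (use N'c in auto)
    have rd: "r < d" using k0 dkr by simp
    from less.IH[OF rd N'c N'nil] obtain ns' P' A' where
      srt: "sorted_wrt (\<ge>) ns'" and pos: "\<forall>n\<in>set ns'. n > 0" and sm: "sum_list ns' = r"
      and P'u: "unimod r P'" and A'c: "A' \<in> carrier_mat r r" and eq': "(1\<^sub>m r + N') * P' = P' * A'"
      and diag': "\<forall>al < length ns'. block_of A' ns' al al = 1\<^sub>m (ns' ! al)"
      and zero': "\<forall>al be. al < be \<and> be < length ns' \<longrightarrow> block_of A' ns' al be = 0\<^sub>m (ns' ! al) (ns' ! be)"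
      and rank': "\<forall>al. 1 \<le> al \<and> al < length ns' \<longrightarrow> int_mat_rank (block_of A' ns' al (al - 1)) = ns' ! al"
      by blast
    have P'c: "P' \<in> carrier_mat r r" using unimod_carrier[OF P'u] .
    obtain P'i where P'i: "P'i \<in> carrier_mat r r" "P' * P'i = 1\<^sub>m r" "P'i * P' = 1\<^sub>m r"
      using P'u unfolding unimod_def by auto
    define X where "X = P'i * C"
    have Xc: "X \<in> carrier_mat r k" unfolding X_def using P'i Cc by auto
    define Dm where "Dm = four_block_mat (1\<^sub>m k) (0\<^sub>m k r) (0\<^sub>m r k) P'"
    define A where "A = four_block_mat (1\<^sub>m k) (0\<^sub>m k r) X A'"
    define P where "P = Qi * Dm"
    have Dmu: "unimod d Dm" using unimod_blockdiag[OF unimod_one P'u] dkr unfolding Dm_def by simp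
    have Dmc: "Dm \<in> carrier_mat d d" using unimod_carrier[OF Dmu] .
    have Qiu: "unimod d Qi" unfolding unimod_def using Qi Qc by auto
    have Pu: "unimod d P" unfolding P_def using unimod_mult[OF Qiu Dmu] .
    have Ac: "A \<in> carrier_mat d d" unfolding A_def using A'c dkr by simp
    have eqn: "(1\<^sub>m d + N) * P = P * A"
    proof -
      have NQic: "N * Qi \<in> carrier_mat d d" using N Qi by auto
      have "Q * N * Qi = Q * (N * Qi)" by (rule assoc_mult_mat) (use Qc N Qi in auto)
      then have "Qi * A0 = Qi * (Q * (N * Qi))" unfolding A0_def by simp
      also have "\<dots> = N * Qi" by (rule inv_cancel_left[OF Qi(3) Qi(1) Qc NQic])
      finally have NQi: "N * Qi = Qi * A0" by simp
      have one_blk: "1\<^sub>m d = four_block_mat (1\<^sub>m k) (0\<^sub>m k r) (0\<^sub>m r k) (1\<^sub>m r)" using dkr by simp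
      have "1\<^sub>m d + A0 = four_block_mat (1\<^sub>m k) (0\<^sub>m k r) (0\<^sub>m r k) (1\<^sub>m r) + four_block_mat (0\<^sub>m k k) (0\<^sub>m k r) C N'"
        by (subst one_blk, subst A0blk, rule refl)
      also have "\<dots> = four_block_mat (1\<^sub>m k + 0\<^sub>m k k) (0\<^sub>m k r + 0\<^sub>m k r) (0\<^sub>m r k + C) (1\<^sub>m r + N')"
        by (rule add_four_block_mat) (use Cc N'c in auto)
      also have "\<dots> = four_block_mat (1\<^sub>m k) (0\<^sub>m k r) C (1\<^sub>m r + N')" using Cc by simp
      finally have A01: "1\<^sub>m d + A0 = four_block_mat (1\<^sub>m k) (0\<^sub>m k r) C (1\<^sub>m r + N')" .
      have S1: "(1\<^sub>m d + N) * Qi = Qi * (1\<^sub>m d + A0)"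
      proof -
        have "(1\<^sub>m d + N) * Qi = 1\<^sub>m d * Qi + N * Qi" by (rule add_mult_distrib_mat) (use N Qi in auto)
        also have "\<dots> = Qi + Qi * A0" using Qi NQi by simp
        also have "Qi * (1\<^sub>m d + A0) = Qi * 1\<^sub>m d + Qi * A0" by (rule mult_add_distrib_mat) (use Qi A0c in auto)
        then have "Qi + Qi * A0 = Qi * (1\<^sub>m d + A0)" using Qi by simp
        finally show ?thesis .
      qed
      have N1c: "1\<^sub>m r + N' \<in> carrier_mat r r" using N'c by simp
      have S2: "(1\<^sub>m d + A0) * Dm = four_block_mat (1\<^sub>m k) (0\<^sub>m k r) C ((1\<^sub>m r + N') * P')"
        unfolding A01 Dm_def
        by (subst mult_four_block_mat[OF one_carrier_mat zero_carrier_mat Cc N1c one_carrier_mat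
          zero_carrier_mat zero_carrier_mat P'c], use Cc N1c P'c in \<open>simp add: right_mult_zero_mat[OF N1c] right_add_zero_mat[OF Cc]\<close>)
      have P'X: "P' * X = C" unfolding X_def by (rule inv_cancel_left[OF P'i(2) P'c P'i(1) Cc])
      have S3: "Dm * A = four_block_mat (1\<^sub>m k) (0\<^sub>m k r) C (P' * A')"
        unfolding A_def Dm_def
        by (subst mult_four_block_mat[OF one_carrier_mat zero_carrier_mat zero_carrier_mat P'c one_carrier_mat
          zero_carrier_mat Xc A'c], use Xc A'c P'c P'X in \<open>simp add: left_add_zero_mat[OF Cc]\<close>)
      have S23: "(1\<^sub>m d + A0) * Dm = Dm * A" using S2 S3 eq' by simp
      have "(1\<^sub>m d + N) * P = (1\<^sub>m d + N) * Qi * Dm" unfolding P_def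
        by (rule assoc_mult_mat[symmetric]) (use N Qi Dmc in auto)
      also have "\<dots> = Qi * (1\<^sub>m d + A0) * Dm" using S1 by simp
      also have "\<dots> = Qi * ((1\<^sub>m d + A0) * Dm)" by (rule assoc_mult_mat) (use A0c Qi Dmc in auto)
      also have "\<dots> = Qi * (Dm * A)" using S23 by simp
      also have "\<dots> = P * A" unfolding P_def by (rule assoc_mult_mat[symmetric]) (use Ac Qi Dmc in auto)
      finally show ?thesis .
    qed
    have rank1: "ns' \<noteq> [] \<Longrightarrow> int_mat_rank (mat (ns' ! 0) k (\<lambda>(i,j). X $$ (i,j))) = ns' ! 0 \<and> ns' ! 0 \<le> k"
    proof -
      assume ne: "ns' \<noteq> []"
      define n1 where "n1 = ns' ! 0"
      have n1r: "n1 \<le> r" using block_offset_bound[of 0 ns'] ne sm unfolding n1_def by (simp add: block_offset_0)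
      define R' where "R' = ?q Q * R"
      have R'c: "R' \<in> carrier_mat d r" unfolding R'_def using Qq R by auto
      define R1 where "R1 = mat k r (\<lambda>(i,j). R' $$ (i,j))"
      define R2 where "R2 = mat r r (\<lambda>(i,j). R' $$ (k+i,j))"
      have R1c: "R1 \<in> carrier_mat k r" and R2c: "R2 \<in> carrier_mat r r" unfolding R1_def R2_def by auto
      have Cq: "?q C \<in> carrier_mat r k" and N'q: "?q N' \<in> carrier_mat r r" using Cc N'c by auto
      have QNc: "Q * N \<in> carrier_mat d d" using Qc N by auto
      have A0q: "?q A0 = ?q (Q * N) * ?q Qi" unfolding A0_def by (rule mq[OF QNc Qi(1)])
      have "?q A0 * R' = ?q (Q * N) * (?q Qi * (?q Q * R))" unfolding A0q R'_def
        by (rule assoc_mult_mat[OF map_carrier_mat[THEN iffD2, OF QNc] Qiq mult_carrier_mat[OF Qq R(1)]])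
      also have "?q Qi * (?q Q * R) = R" by (rule inv_cancel_left[OF QiQ Qiq Qq R(1)])
      finally have A0R: "?q A0 * R' = ?q (Q * N) * R" .
      have ent1: "(?q A0 * R') $$ (k+i, j) = (if i = j then 1 else 0)" if "i < r" "j < r" for i j
      proof -
        have "row T i = row (?q (Q * N)) (k+i)" unfolding T_def using that dkr QNc N
          by (intro eq_vecI, auto)
        note rT = this
        have rQN: "dim_row (?q (Q*N)) = d" "dim_col R = r" "dim_row T = r" using Qc N R(1) Tc by auto
        have "(?q (Q * N) * R) $$ (k+i, j) = row (?q (Q*N)) (k+i) \<bullet> col R j"
          by (rule index_mult_mat(1)) (simp_all add: rQN that dkr carrier_matD[OF Qc])
        also have "\<dots> = row T i \<bullet> col R j" using rT by simp
        also have "\<dots> = (T * R) $$ (i,j)" by (rule index_mult_mat(1)[symmetric]) (simp_all add: rQN that)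
        finally have "(?q (Q * N) * R) $$ (k+i, j) = (T * R) $$ (i,j)" .
        then show ?thesis unfolding A0R using R(2) that by simp
      qed
      have A0qb: "?q A0 = four_block_mat (0\<^sub>m k k) (0\<^sub>m k r) (?q C) (?q N')"
        unfolding A0blk by (rule eq_matI, insert Cc N'c, auto)
      have R'b: "R' = four_block_mat R1 (0\<^sub>m k 0) R2 (0\<^sub>m r 0)"
      proof (rule eq_matI)
        fix i j assume "i < dim_row (four_block_mat R1 (0\<^sub>m k 0) R2 (0\<^sub>m r (0::nat) :: rat mat))"
          "j < dim_col (four_block_mat R1 (0\<^sub>m k 0) R2 (0\<^sub>m r (0::nat) :: rat mat))"
        then have ij: "i < k + r" "j < r" using R1c R2c by auto
        show "R' $$ (i,j) = four_block_mat R1 (0\<^sub>m k 0) R2 (0\<^sub>m r 0) $$ (i,j)"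
          using ij R1c R2c unfolding R1_def R2_def by auto
      qed (use R'c R1c R2c dkr in auto)
      have prod: "?q A0 * R' = four_block_mat (0\<^sub>m k k * R1 + 0\<^sub>m k r * R2) (0\<^sub>m k k * 0\<^sub>m k 0 + 0\<^sub>m k r * 0\<^sub>m r 0)
          (?q C * R1 + ?q N' * R2) (?q C * 0\<^sub>m k 0 + ?q N' * 0\<^sub>m r 0)"
        unfolding A0qb R'b
        by (rule mult_four_block_mat[OF zero_carrier_mat zero_carrier_mat Cq N'q R1c zero_carrier_mat R2c zero_carrier_mat])
      have E1: "?q C * R1 + ?q N' * R2 = 1\<^sub>m r"
      proof (rule eq_matI)
        fix i j assume "i < dim_row (1\<^sub>m r :: rat mat)" "j < dim_col (1\<^sub>m r :: rat mat)"
        then have ij: "i < r" "j < r" by auto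
        have "(?q C * R1 + ?q N' * R2) $$ (i,j) = (?q A0 * R') $$ (k+i, j)"
          unfolding prod using ij Cq N'q R1c R2c by simp
        then show "(?q C * R1 + ?q N' * R2) $$ (i,j) = 1\<^sub>m r $$ (i,j)" using ent1[OF ij] ij by simp
      qed (use Cq N'q R1c R2c in auto)
      define Z where "Z = P'i * N' * P'"
      have Zc: "Z \<in> carrier_mat r r" unfolding Z_def using P'i N'c P'c by auto
      have A'Z: "A' = 1\<^sub>m r + Z"
      proof -
        have "A' = P'i * (P' * A')" by (rule inv_cancel_left[OF P'i(3) P'i(1) P'c A'c, symmetric])
        also have "P' * A' = (1\<^sub>m r + N') * P'" using eq' by simp
        also have "(1\<^sub>m r + N') * P' = P' + N' * P'"
          using add_mult_distrib_mat[OF one_carrier_mat N'c P'c] P'c by simp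
        also have "P'i * (P' + N' * P') = P'i * P' + P'i * (N' * P')"
          by (rule mult_add_distrib_mat[OF P'i(1) P'c mult_carrier_mat[OF N'c P'c]])
        also have "P'i * (N' * P') = Z" unfolding Z_def by (rule assoc_mult_mat[OF P'i(1) N'c P'c, symmetric])
        also have "P'i * P' = 1\<^sub>m r" by (rule P'i(3))
        finally show ?thesis .
      qed
      have Z0: "Z $$ (i,j) = 0" if "i < n1" "j < r" for i j
      proof -
        have "A' $$ (i,j) = (if i = j then 1 else 0)"
          by (rule top_rows_identity[OF A'c sm ne diag' zero']) (use that n1_def in auto)
        moreover have "A' $$ (i,j) = (if i = j then 1 else 0) + Z $$ (i,j)"
          using A'Z that n1r Zc by simp
        ultimately show ?thesis by simp
      qed
      let ?P'q = "?q P'" and ?P'iq = "?q P'i"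
      have P'q: "?P'q \<in> carrier_mat r r" and P'iq: "?P'iq \<in> carrier_mat r r" using P'c P'i by auto
      have PPi: "?P'q * ?P'iq = 1\<^sub>m r" using P'i mq[OF P'c P'i(1)] q1[of r] by simp
      have PiP: "?P'iq * ?P'q = 1\<^sub>m r" using P'i mq[OF P'i(1) P'c] q1[of r] by simp
      define U where "U = R1 * ?P'q"
      define V where "V = ?P'iq * R2 * ?P'q"
      have Uc: "U \<in> carrier_mat k r" unfolding U_def by (rule mult_carrier_mat[OF R1c P'q])
      have Vc: "V \<in> carrier_mat r r" unfolding V_def by (rule mult_carrier_mat[OF mult_carrier_mat[OF P'iq R2c] P'q])
      have Xq: "?q X = ?P'iq * ?q C" unfolding X_def by (rule mq[OF P'i(1) Cc])
      have Zq: "?q Z = ?P'iq * ?q N' * ?P'q" unfolding Z_def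
        unfolding mq[OF mult_carrier_mat[OF P'i(1) N'c] P'c] mq[OF P'i(1) N'c] by (rule refl)
      have canc: "?P'q * (?P'iq * W) = W" if "dim_row W = r" for W :: "rat mat"
      proof -
        have "W \<in> carrier_mat r (dim_col W)" using that unfolding carrier_mat_def by simp
        then show ?thesis by (rule inv_cancel_left[OF PPi P'q P'iq])
      qed
      have E2: "?q X * U + ?q Z * V = ?P'iq * (?q C * R1 + ?q N' * R2) * ?P'q"
        unfolding Xq Zq U_def V_def using Cq N'q R1c R2c P'q P'iq
        by (simp only: mat_norm canc)
      then have E2': "?q X * U + ?q Z * V = 1\<^sub>m r" unfolding E1 right_mult_one_mat[OF P'iq] PiP .
      have E3: "(?q X * U) $$ (i,j) = (if i = j then 1 else 0)" if "i < n1" "j < n1" for i j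
      proof -
        have ij: "i < r" "j < r" using that n1r by auto
        have "row (?q Z) i = 0\<^sub>v r" using Z0 that ij Zc by (intro eq_vecI, auto)
        then have "(?q Z * V) $$ (i,j) = 0" using ij Zc Vc by simp
        moreover have "(?q X * U + ?q Z * V) $$ (i,j) = (?q X * U) $$ (i,j) + (?q Z * V) $$ (i,j)"
          using ij Xc Uc Zc Vc by simp
        ultimately show ?thesis using E2' ij by simp
      qed
      define Xt where "Xt = mat n1 k (\<lambda>(i,j). X $$ (i,j))"
      define Ut where "Ut = mat k n1 (\<lambda>(i,j). U $$ (i,j))"
      have Xtc: "Xt \<in> carrier_mat n1 k" and Utc: "Ut \<in> carrier_mat k n1" unfolding Xt_def Ut_def by auto
      have XU: "?q Xt * Ut = 1\<^sub>m n1"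
      proof (rule eq_matI)
        fix i j assume "i < dim_row (1\<^sub>m n1 :: rat mat)" "j < dim_col (1\<^sub>m n1 :: rat mat)"
        then have ij: "i < n1" "j < n1" by auto
        have "row (?q Xt) i = row (?q X) i" unfolding Xt_def using ij n1r Xc by (intro eq_vecI, auto)
        moreover have "col Ut j = col U j" unfolding Ut_def using ij n1r Uc by (intro eq_vecI, auto)
        ultimately have "(?q Xt * Ut) $$ (i,j) = (?q X * U) $$ (i,j)" using ij n1r Xc Uc Xtc Utc by simp
        then show "(?q Xt * Ut) $$ (i,j) = 1\<^sub>m n1 $$ (i,j)" using E3[OF ij] ij by simp
      qed (use Xtc Utc in auto)
      from right_inverse_int_rank[OF Xtc Utc XU] show ?thesis unfolding Xt_def n1_def by simp
    qed
    show ?thesis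
    proof (rule exI[of _ "k # ns'"], rule exI[of _ P], rule exI[of _ A], intro conjI)
      have "\<forall>x\<in>set ns'. x \<le> k"
      proof
        fix x assume x: "x \<in> set ns'"
        then have ne: "ns' \<noteq> []" by auto
        then obtain a rest where ar: "ns' = a # rest" by (cases ns') auto
        have "x \<le> a" using x srt ar by auto
        moreover have "a \<le> k" using rank1[OF ne] ar by simp
        ultimately show "x \<le> k" by simp
      qed
      then show "sorted_wrt (\<ge>) (k # ns')" using srt by simp
      show "\<forall>n\<in>set (k # ns'). n > 0" using k0 pos by simp
      show "sum_list (k # ns') = d" using sm dkr by simp
      show "unimod d P" by (rule Pu)
      show "A \<in> carrier_mat d d" by (rule Ac)
      show "(1\<^sub>m d + N) * P = P * A" by (rule eqn)
      show "\<forall>al<length (k # ns'). block_of A (k # ns') al al = 1\<^sub>m ((k # ns') ! al)"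
      proof (intro allI impI)
        fix al assume al: "al < length (k # ns')"
        show "block_of A (k # ns') al al = 1\<^sub>m ((k # ns') ! al)"
        proof (cases al)
          case 0 then show ?thesis using block_of_top_left[OF A_def one_carrier_mat A'c] by simp
        next
          case (Suc al')
          then have al': "al' < length ns'" using al by simp
          show ?thesis using block_of_shift[OF A_def one_carrier_mat A'c sm al' al'] diag' al' Suc by simp
        qed
      qed
      show "\<forall>al be. al < be \<and> be < length (k # ns') \<longrightarrow> block_of A (k # ns') al be = 0\<^sub>m ((k # ns') ! al) ((k # ns') ! be)"
      proof (intro allI impI)
        fix al be assume h: "al < be \<and> be < length (k # ns')"
        then obtain be' where be: "be = Suc be'" "be' < length ns'" by (cases be) auto
        show "block_of A (k # ns') al be = 0\<^sub>m ((k # ns') ! al) ((k # ns') ! be)"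
        proof (cases al)
          case 0
          have bb: "block_offset ns' be' + ns' ! be' \<le> r" using block_offset_bound[OF be(2)] sm by simp
          have "block_of A (k # ns') 0 (Suc be') = mat k (ns' ! be') (\<lambda>(i,j). 0\<^sub>m k r $$ (i, block_offset ns' be' + j))"
            by (rule block_of_top_right[OF A_def one_carrier_mat zero_carrier_mat A'c sm be(2)])
          also have "\<dots> = 0\<^sub>m k (ns' ! be')" using bb by (intro eq_matI, auto)
          finally show ?thesis using 0 be by simp
        next
          case (Suc al')
          then have al': "al' < length ns'" "al' < be'" using h be by auto
          show ?thesis using block_of_shift[OF A_def one_carrier_mat A'c sm al'(1) be(2)] zero' al' Suc be by simp
        qed
      qed
      show "\<forall>al. 1 \<le> al \<and> al < length (k # ns') \<longrightarrow> int_mat_rank (block_of A (k # ns') al (al - 1)) = (k # ns') ! al"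
      proof (intro allI impI)
        fix al assume h: "1 \<le> al \<and> al < length (k # ns')"
        then obtain al' where al: "al = Suc al'" "al' < length ns'" by (cases al) auto
        show "int_mat_rank (block_of A (k # ns') al (al - 1)) = (k # ns') ! al"
        proof (cases al')
          case 0
          then have ne: "ns' \<noteq> []" using al by auto
          have "block_of A (k # ns') 1 0 = mat (ns' ! 0) k (\<lambda>(i,j). X $$ (i,j))"
            by (rule block_of_sub[OF A_def one_carrier_mat A'c sm ne])
          then show ?thesis using rank1[OF ne] al 0 by simp
        next
          case (Suc al'')
          have a2: "al'' < length ns'" using al Suc by simp
          have "block_of A (k # ns') al (al - 1) = block_of A' ns' al' al''"
            using block_of_shift[OF A_def one_carrier_mat A'c sm al(2) a2] al Suc by simp
          then show ?thesis using rank'[rule_format, of al'] al Suc by simp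
        qed
      qed
    qed
  qed
qed

theorem mainTheorem11:
  fixes S :: "int mat" and d :: nat
  assumes "S \<in> carrier_mat d d"
    and "invertible_mat S"
    and "spectrum (map_mat complex_of_int S) = {1}"
  shows "\<exists>ns :: nat list. \<exists>P A :: int mat.
           sorted_wrt (\<ge>) ns \<and> (\<forall>n \<in> set ns. n > 0) \<and> sum_list ns = d \<and>
           P \<in> carrier_mat d d \<and> invertible_mat P \<and>
           A \<in> carrier_mat d d \<and> S * P = P * A \<and>
           (\<forall>al < length ns. block_of A ns al al = 1\<^sub>m (ns ! al)) \<and>
           (\<forall>al be. al < be \<and> be < length ns \<longrightarrow> block_of A ns al be = 0\<^sub>m (ns ! al) (ns ! be)) \<and>
           (\<forall>al. 1 \<le> al \<and> al < length ns \<longrightarrow> int_mat_rank (block_of A ns al (al - 1)) = ns ! al)"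
proof -
  note S = assms(1)
  have Nc: "S - 1\<^sub>m d \<in> carrier_mat d d" using S unfolding carrier_mat_def by auto
  have nil: "(S - 1\<^sub>m d) ^\<^sub>m d = 0\<^sub>m d d" by (rule unipotent_nilpotent[OF S assms(3)])
  have S1: "1\<^sub>m d + (S - 1\<^sub>m d) = S" using S by (intro eq_matI, auto)
  from core[OF Nc nil] obtain ns P A where
    h: "sorted_wrt (\<ge>) ns" "(\<forall>n\<in>set ns. n > 0)" "sum_list ns = d"
     "unimod d P" "A \<in> carrier_mat d d" "(1\<^sub>m d + (S - 1\<^sub>m d)) * P = P * A"
     "(\<forall>al < length ns. block_of A ns al al = 1\<^sub>m (ns ! al))"
     "(\<forall>al be. al < be \<and> be < length ns \<longrightarrow> block_of A ns al be = 0\<^sub>m (ns ! al) (ns ! be))"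
     "(\<forall>al. 1 \<le> al \<and> al < length ns \<longrightarrow> int_mat_rank (block_of A ns al (al - 1)) = ns ! al)"
    by blast
  obtain Pi where Pi: "P \<in> carrier_mat d d" "Pi \<in> carrier_mat d d" "P * Pi = 1\<^sub>m d" "Pi * P = 1\<^sub>m d"
    using h(4) unfolding unimod_def by auto
  have inv: "invertible_mat P"
    unfolding invertible_mat_def inverts_mat_def square_mat.simps using Pi by auto
  have eq: "S * P = P * A" using h(6) unfolding S1 .
  show ?thesis
    by (rule exI[of _ ns], rule exI[of _ P], rule exI[of _ A]) (use h Pi(1) inv eq in blast)
qed

end
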